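(* Let $\Lambda=\{\lambda_i\}_{i\geq 0}$ be a numerical semigroup with $\lambda_0=0<\lambda_1<\lambda_2<\cdots$, conductor $c=\lambda_k$, and let $i$ be an index with $0\leq i<k$. Then every order-$i$ seed of $\Lambda$ is at most $c+\lambda_{i+1}-\lambda_i-1$. In particular, the number of order-$i$ seeds of $\Lambda$ is at most $\lambda_{i+1}-\lambda_i$.
   Context: A numerical semigroup is a subset $\Lambda\subseteq\mathbb{N}_0$ containing $0$, closed under addition, with finite complement; the elements of $\mathbb{N}_0\setminus\Lambda$ are gaps and their number $g$ is the genus. The elements of $\Lambda$ are enumerated increasingly as $\lambda_0=0<\lambda_1<\lambda_2<\cdots$; then $\lambda_i=i+g$ for all large $i$, $k$ denotes the smallest index with $\lambda_i=i+g$ for all $i\ge k$, and the conductor is $c=\lambda_k=k+g$. For $i\geq 0$ let $\Lambda_i=\Lambda\setminus\{\lambda_1,\dots,\lambda_i\}$ (a numerical semigroup). A generator of a numerical semigroup is a nonzero element that is not the sum of two nonzero elements of the semigroup. An element $\lambda_t$ with $t\geq k$ is an order-$i$ seed of $\Lambda$ (for $0\le i<k$) if $\lambda_t+\lambda_i$ is a generator of $\Lambda_i$. *)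

theory Defs
  imports Main "HOL-Library.Infinite_Set"
begin

definition numerical_semigroup :: "nat set \<Rightarrow> bool" where
  "numerical_semigroup S \<longleftrightarrow> 0 \<in> S \<and> (\<forall>a\<in>S. \<forall>b\<in>S. a + b \<in> S) \<and> finite (UNIV - S)"

definition lam :: "nat set \<Rightarrow> nat \<Rightarrow> nat" where
  "lam S i = enumerate S i"

definition genus :: "nat set \<Rightarrow> nat" where
  "genus S = card (UNIV - S)"

definition cindex :: "nat set \<Rightarrow> nat" where
  "cindex S = (LEAST k. \<forall>i\<ge>k. lam S i = i + genus S)"

definition conductor :: "nat set \<Rightarrow> nat" where
  "conductor S = lam S (cindex S)"

definition remove_first :: "nat set \<Rightarrow> nat \<Rightarrow> nat set" where
  "remove_first S i = S - {lam S j | j. 1 \<le> j \<and> j \<le> i}"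

definition generator :: "nat set \<Rightarrow> nat \<Rightarrow> bool" where
  "generator T x \<longleftrightarrow> x \<in> T \<and> x \<noteq> 0 \<and>
     \<not> (\<exists>a\<in>T. \<exists>b\<in>T. a \<noteq> 0 \<and> b \<noteq> 0 \<and> a + b = x)"

definition seed :: "nat set \<Rightarrow> nat \<Rightarrow> nat \<Rightarrow> bool" where
  "seed S i x \<longleftrightarrow> (\<exists>t\<ge>cindex S. x = lam S t \<and> generator (remove_first S i) (lam S t + lam S i))"

end

theory Submission
  imports Defs
begin

lemma lam_count:
  assumes inf: "infinite S" and s: "(s::nat) \<in> S"
  shows "lam S (card {x\<in>S. x < s}) = s"
proof -
  obtain p where p: "enumerate S p = s" using enumerate_Ex[OF inf s] by blast
  have "{x\<in>S. x < s} = enumerate S ` {..<p}"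
  proof
    show "{x\<in>S. x < s} \<subseteq> enumerate S ` {..<p}"
    proof
      fix x assume "x \<in> {x\<in>S. x < s}"
      then have x: "x \<in> S" "x < s" by auto
      obtain q where q: "enumerate S q = x" using enumerate_Ex[OF inf x(1)] by blast
      have "q < p" using x(2) q p inf by (metis enumerate_mono_iff)
      then show "x \<in> enumerate S ` {..<p}" using q by auto
    qed
  next
    show "enumerate S ` {..<p} \<subseteq> {x\<in>S. x < s}"
      using p inf by (auto simp: enumerate_in_set)
  qed
  moreover have "inj_on (enumerate S) {..<p}"
    by (metis inf inj_enumerate inj_on_subset subset_UNIV)
  ultimately have "card {x\<in>S. x < s} = p" by (simp add: card_image)
  then show ?thesis using p by (simp add: lam_def)
qed

theorem lemma1:
  fixes S :: "nat set" and i :: nat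
  assumes "numerical_semigroup S" and "i < cindex S"
  shows "(\<forall>x. seed S i x \<longrightarrow> x \<le> conductor S + lam S (i+1) - lam S i - 1)
         \<and> card {x. seed S i x} \<le> lam S (i+1) - lam S i"
proof -
  have S0: "0 \<in> S" and add: "\<And>a b. a \<in> S \<Longrightarrow> b \<in> S \<Longrightarrow> a + b \<in> S"
    and fin: "finite (UNIV - S)" using assms(1) by (auto simp: numerical_semigroup_def)
  have inf: "infinite S"
  proof
    assume "finite S"
    then have "finite (S \<union> (UNIV - S))" using fin by blast
    then show False by simp
  qed
  obtain N where N0: "\<forall>n\<in>UNIV - S. n < N"
    using fin unfolding finite_nat_set_iff_bounded by blast
  have N: "\<And>n. n \<in> UNIV - S \<Longrightarrow> n < N" using N0 by blast
  define g where "g = genus S"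
  have big: "\<And>M. M \<ge> N \<Longrightarrow> lam S (M - g) = M \<and> g \<le> M"
  proof -
    fix M assume M: "M \<ge> N"
    have sub: "UNIV - S \<subseteq> {..<M}" using N M by fastforce
    have eq: "{x\<in>S. x < M} = {..<M} - (UNIV - S)" by auto
    have gM: "g \<le> M" using card_mono[OF _ sub] by (simp add: g_def genus_def)
    have "card {x\<in>S. x < M} = M - g"
      unfolding eq using sub fin by (simp add: card_Diff_subset g_def genus_def)
    moreover have "M \<in> S" using N M by (meson DiffI UNIV_I leD)
    ultimately show "lam S (M - g) = M \<and> g \<le> M" using lam_count[OF inf] gM by metis
  qed
  have ex: "\<forall>j\<ge>N. lam S j = j + g"
  proof (intro allI impI)
    fix j assume "N \<le> j"
    then show "lam S j = j + g" using big[of "j + g"] by simp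
  qed
  define k where "k = cindex S"
  have kprop: "\<forall>j\<ge>k. lam S j = j + g"
    unfolding k_def cindex_def g_def using LeastI[of "\<lambda>k. \<forall>j\<ge>k. lam S j = j + genus S", OF ex[unfolded g_def]] .
  define c where "c = conductor S"
  have ck: "c = lam S k" by (simp add: c_def k_def conductor_def)
  have inS: "\<And>n. n \<ge> c \<Longrightarrow> n \<in> S"
  proof -
    fix n assume "n \<ge> c"
    then have "n - g \<ge> k" using kprop ck by auto
    then have "lam S (n - g) = n" using kprop \<open>n \<ge> c\<close> ck by fastforce
    then show "n \<in> S" by (metis inf enumerate_in_set lam_def)
  qed
  have ik: "i < k" using assms(2) k_def by simp
  have lamlt: "lam S i < c" using ik ck inf by (simp add: lam_def)
  have step: "lam S i < lam S (i+1)" using inf by (simp add: lam_def)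
  define d where "d = lam S (i+1) - lam S i"
  have d1: "d \<ge> 1" using step d_def by simp
  have seedge: "\<And>x. seed S i x \<Longrightarrow> c \<le> x"
    using inf unfolding seed_def ck k_def by (auto simp: lam_def)
  have bound: "\<And>x. seed S i x \<Longrightarrow> x \<le> c + d - 1"
  proof (rule ccontr)
    fix x assume sd: "seed S i x" and nle: "\<not> x \<le> c + d - 1"
    then obtain t where t: "x = lam S t" and gen: "generator (remove_first S i) (lam S t + lam S i)"
      unfolding seed_def by blast
    define y where "y = x - d"
    have yc: "y \<ge> c" using nle d1 y_def by simp
    have c0: "c > 0" using lamlt by simp
    have yR: "y \<in> remove_first S i"
    proof -
      have "y \<in> S" using inS yc by simp
      moreover have "\<And>j. j \<le> i \<Longrightarrow> lam S j < y"
      proof -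
        fix j assume "j \<le> i"
        then have "lam S j \<le> lam S i" using inf by (simp add: lam_def)
        then show "lam S j < y" using lamlt yc by simp
      qed
      ultimately show ?thesis unfolding remove_first_def by fastforce
    qed
    have lR: "lam S (i+1) \<in> remove_first S i"
    proof -
      have "lam S (i+1) \<in> S" using inf by (simp add: lam_def enumerate_in_set)
      moreover have "\<And>j. j \<le> i \<Longrightarrow> lam S j \<noteq> lam S (i+1)"
        using inf unfolding lam_def by (metis Suc_eq_plus1 enumerate_mono le_imp_less_Suc less_not_refl)
      ultimately show ?thesis unfolding remove_first_def by fastforce
    qed
    have "lam S (i+1) \<noteq> 0" using step by simp
    moreover have "y \<noteq> 0" using yc c0 by simp
    moreover have "y + lam S (i+1) = lam S t + lam S i"
      using y_def d_def t nle step by simp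
    ultimately show False using gen yR lR unfolding generator_def by blast
  qed
  have part1: "\<forall>x. seed S i x \<longrightarrow> x \<le> conductor S + lam S (i+1) - lam S i - 1"
    using bound step unfolding c_def d_def by fastforce
  have "{x. seed S i x} \<subseteq> {c..<c+d}"
    using bound seedge d1 by fastforce
  then have "card {x. seed S i x} \<le> d"
    using card_mono[of "{c..<c+d}"] by fastforce
  then show ?thesis using part1 d_def by simp
qed

end
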